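(* Let $k\geq 2$ and $n\geq 2t\geq 2$ be integers. Let $B_k(n,t)$ be the number of length-$n$ words over $\Sigma_k$ that have a unique border, this border having length $t$. Then \[\frac{B_k(n,t)}{k^n}\leq \frac{1}{k^t}.\]
   Context: $\Sigma_k=\{0,1,\ldots,k-1\}$. A border of a word $w$ is a non-empty word that is both a proper prefix and a proper suffix of $w$. A word has a unique border if it has exactly one border. *)

theory Defs
  imports Complex_Main "HOL-Library.Sublist"
begin

definition words :: "nat \<Rightarrow> nat \<Rightarrow> nat list set" where
  "words k n = {w. length w = n \<and> set w \<subseteq> {0..<k}}"

definition is_border :: "'a list \<Rightarrow> 'a list \<Rightarrow> bool" where
  "is_border u w \<longleftrightarrow> u \<noteq> [] \<and> strict_prefix u w \<and> strict_suffix u w"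

definition borders :: "'a list \<Rightarrow> 'a list set" where
  "borders w = {u. is_border u w}"

definition B :: "nat \<Rightarrow> nat \<Rightarrow> nat \<Rightarrow> nat" where
  "B k n t = card {w \<in> words k n. \<exists>u. borders w = {u} \<and> length u = t}"

end

theory Submission
  imports Defs
begin

lemma card_words: "card (words k m) = k ^ m" "finite (words k m)"
proof -
  have "words k m = {xs. set xs \<subseteq> {0..<k} \<and> length xs = m}"
    unfolding words_def by auto
  then show "card (words k m) = k ^ m" "finite (words k m)"
    using card_lists_length_eq[of "{0..<k}" m] finite_lists_length_eq[of "{0..<k}" m] by auto
qed

theorem lemma11:
  fixes k n t :: nat
  assumes "k \<ge> 2" and "t \<ge> 1" and "n \<ge> 2 * t"
  shows "real (B k n t) / real k ^ n \<le> 1 / real k ^ t"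
proof -
  let ?S = "{w \<in> words k n. \<exists>u. borders w = {u} \<and> length u = t}"
  let ?T = "{w \<in> words k n. drop (n - t) w = take t w}"
  have sub: "?S \<subseteq> ?T"
  proof
    fix w assume "w \<in> ?S"
    then obtain u where w: "w \<in> words k n" "borders w = {u}" "length u = t" by auto
    then have "is_border u w" unfolding borders_def by auto
    then have "prefix u w" "suffix u w" unfolding is_border_def
      by (auto simp: strict_prefix_def strict_suffix_def)
    then have "u = take t w" "u = drop (n - t) w" using w
      by (auto simp: prefix_def suffix_def words_def)
    then show "w \<in> ?T" using w by auto
  qed
  have inj: "inj_on (take (n - t)) ?T"
  proof
    fix x y assume x: "x \<in> ?T" and y: "y \<in> ?T" and e: "take (n - t) x = take (n - t) y"
    have "take t x = take t y" using e assms(3)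
      by (metis min.absorb1 take_take diff_le_mono2 mult_2 le_add_diff_inverse2 le_diff_conv2 add_leD1 nat_le_iff_add)
    then have "drop (n - t) x = drop (n - t) y" using x y by auto
    then show "x = y" using e by (metis append_take_drop_id)
  qed
  have img: "take (n - t) ` ?T \<subseteq> words k (n - t)"
    using assms by (auto simp: words_def dest: in_set_takeD)
  have "card ?S \<le> card ?T"
    by (rule card_mono) (use card_words sub in auto)
  also have "card ?T \<le> card (words k (n - t))"
    using card_inj_on_le[OF inj img] card_words by auto
  finally have c: "B k n t \<le> k ^ (n - t)" unfolding B_def card_words by simp
  have kp: "real k > 0" using assms by simp
  have "real (B k n t) / real k ^ n \<le> real k ^ (n - t) / real k ^ n"
    using c kp by (simp add: divide_right_mono of_nat_power[symmetric] del: of_nat_power)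
  also have "\<dots> = 1 / real k ^ t"
  proof -
    have "real k ^ n = real k ^ (n - t) * real k ^ t"
      using assms by (simp add: power_add[symmetric])
    then show ?thesis using kp by simp
  qed
  finally show ?thesis .
qed

end
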